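(* Let $S=\{x_1,\dots,x_N\}\subset\mathbb{R}^n$ be a two-distance tight frame for $\mathbb{R}^n$ with inner products $a,b$, $a^2\neq b^2$. Let $\Gamma_1$ be the graph on vertex set $\{1,\dots,N\}$ in which distinct $i,j$ are adjacent iff $\langle x_i,x_j\rangle=a$, and $\Gamma_2$ its complement (adjacency iff $\langle x_i,x_j\rangle=b$). Then $\Gamma_1$ and $\Gamma_2$ are strongly regular graphs: they are regular, any two adjacent vertices have the same number of common neighbours, and any two nonadjacent vertices have the same number of common neighbours.
   Context: A two-distance tight frame for $\mathbb{R}^n$ is a finite set of unit vectors $\{x_1,\dots,x_N\}\subset\mathbb{R}^n$ such that there are two real numbers $a\neq b$ with $\langle x_i,x_j\rangle\in\{a,b\}$ for all $i\neq j$, and $\sum_{i=1}^N\langle x,x_i\rangle^2=\frac{N}{n}\|x\|^2$ for all $x\in\mathbb{R}^n$. *)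

theory Defs
  imports "HOL-Analysis.Analysis"
begin

definition two_distance_tight_frame :: "(real ^ 'n) set \<Rightarrow> real \<Rightarrow> real \<Rightarrow> bool" where
  "two_distance_tight_frame S a b \<longleftrightarrow>
     finite S \<and> a \<noteq> b \<and>
     (\<forall>x\<in>S. norm x = 1) \<and>
     (\<forall>x\<in>S. \<forall>y\<in>S. x \<noteq> y \<longrightarrow> x \<bullet> y = a \<or> x \<bullet> y = b) \<and>
     (\<forall>x::real^'n. (\<Sum>v\<in>S. (x \<bullet> v)\<^sup>2) = real (card S) / real CARD('n) * (norm x)\<^sup>2)"

definition strongly_regular :: "'a set \<Rightarrow> ('a \<Rightarrow> 'a \<Rightarrow> bool) \<Rightarrow> bool" where
  "strongly_regular V E \<longleftrightarrow>
     (\<exists>k::nat. \<forall>v\<in>V. card {w\<in>V. E v w} = k) \<and>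
     (\<exists>l::nat. \<forall>v\<in>V. \<forall>w\<in>V. v \<noteq> w \<and> E v w \<longrightarrow> card {u\<in>V. E v u \<and> E w u} = l) \<and>
     (\<exists>m::nat. \<forall>v\<in>V. \<forall>w\<in>V. v \<noteq> w \<and> \<not> E v w \<longrightarrow> card {u\<in>V. E v u \<and> E w u} = m)"

end

theory Submission
  imports Defs
begin

lemma polar:
  fixes S :: "(real ^ 'n) set"
  assumes Q: "\<forall>x::real^'n. (\<Sum>v\<in>S. (x \<bullet> v)\<^sup>2) = c * (norm x)\<^sup>2"
  shows "(\<Sum>v\<in>S. (x \<bullet> v) * (y \<bullet> v)) = c * (x \<bullet> y)"
proof -
  have "(\<Sum>v\<in>S. (x \<bullet> v) * (y \<bullet> v)) = ((\<Sum>v\<in>S. ((x+y) \<bullet> v)\<^sup>2) - (\<Sum>v\<in>S. ((x-y) \<bullet> v)\<^sup>2))/4"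
    by (simp add: sum_subtractf[symmetric] sum_divide_distrib inner_add_left inner_diff_left power2_eq_square algebra_simps)
  also have "\<dots> = c * ((norm (x+y))\<^sup>2 - (norm (x-y))\<^sup>2) / 4"
    using Q[rule_format, of "x+y"] Q[rule_format, of "x-y"] by (simp only: right_diff_distrib)
  also have "\<dots> = c * (x \<bullet> y)" proof -
    have "(norm (x+y))\<^sup>2 - (norm (x-y))\<^sup>2 = 4 * (x \<bullet> y)"
    proof -
      have a: "2*(x \<bullet> y) = (norm (x + y))\<^sup>2 - (norm x)\<^sup>2 - (norm y)\<^sup>2" using dot_norm[of x y] by simp
      have b: "2*(x \<bullet> y) = (norm x)\<^sup>2 + (norm y)\<^sup>2 - (norm (x - y))\<^sup>2" using dot_norm_neg[of x y] by simp
      show ?thesis using a b by linarith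
    qed
    then show ?thesis by simp
  qed
  finally show ?thesis .
qed

lemma card_ind:
  assumes "finite A"
  shows "real (card {x\<in>A. P x}) = (\<Sum>x\<in>A. if P x then 1 else 0)"
  using assms by (simp add: sum.inter_filter[symmetric])

lemma const_nat1:
  assumes "\<forall>x\<in>A. real (f x) = C"
  shows "\<exists>k::nat. \<forall>x\<in>A. f x = k"
proof (cases "A = {}")
  case False
  then obtain x0 where "x0 \<in> A" by blast
  then show ?thesis using assms by (metis of_nat_eq_iff)
qed simp

lemma const_nat2:
  assumes "\<forall>v\<in>S. \<forall>w\<in>S. P v w \<longrightarrow> real (f v w) = C"
  shows "\<exists>k::nat. \<forall>v\<in>S. \<forall>w\<in>S. P v w \<longrightarrow> f v w = k"
proof (cases "\<exists>v\<in>S. \<exists>w\<in>S. P v w")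
  case True
  then obtain v0 w0 where "v0 \<in> S" "w0 \<in> S" "P v0 w0" by blast
  then show ?thesis using assms by (metis of_nat_eq_iff)
qed auto

lemma main:
  fixes S :: "(real^'n) set" and a b :: real
  assumes fr: "two_distance_tight_frame S a b" and ab2: "a\<^sup>2 \<noteq> b\<^sup>2"
  shows "strongly_regular S (\<lambda>x y. x \<noteq> y \<and> x \<bullet> y = a)"
proof -
  from fr have fin: "finite S" and ab: "a \<noteq> b" and un: "\<forall>x\<in>S. norm x = 1"
    and two: "\<forall>x\<in>S. \<forall>y\<in>S. x \<noteq> y \<longrightarrow> x \<bullet> y = a \<or> x \<bullet> y = b"
    and Q: "\<forall>x::real^'n. (\<Sum>v\<in>S. (x \<bullet> v)\<^sup>2) = real (card S) / real CARD('n) * (norm x)\<^sup>2"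
    unfolding two_distance_tight_frame_def by auto
  define c where "c = real (card S) / real CARD('n)"
  define N where "N = real (card S)"
  have ab2': "a\<^sup>2 - b\<^sup>2 \<noteq> 0" using ab2 by simp
  have abn: "(a - b)\<^sup>2 \<noteq> 0" using ab by simp
  have P: "(\<Sum>v\<in>S. (x \<bullet> v) * (y \<bullet> v)) = c * (x \<bullet> y)" for x y
    using polar[of S c x y] Q c_def by blast
  have self: "x \<bullet> x = 1" if "x \<in> S" for x
  proof -
    have "x \<bullet> x = (norm x)\<^sup>2" by (simp add: power2_norm_eq_inner)
    then show ?thesis using un that by simp
  qed
  define ind :: "real^'n \<Rightarrow> real^'n \<Rightarrow> real" where "ind u v = (if u \<bullet> v = a then 1 else (0::real))" for u v
  define deg :: "real^'n \<Rightarrow> nat" where "deg u = card {w\<in>S. u \<noteq> w \<and> u \<bullet> w = a}" for u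
  have val: "u \<bullet> v = b + (a - b) * ind u v" if "u \<in> S" "v \<in> S" "u \<noteq> v" for u v
    using two that by (auto simp: ind_def)
  have degsum: "real (deg u) = (\<Sum>v\<in>S-{u}. ind u v)" if "u \<in> S" for u
  proof -
    have "{w\<in>S. u \<noteq> w \<and> u \<bullet> w = a} = {w\<in>S-{u}. u \<bullet> w = a}" by auto
    then show ?thesis using card_ind[of "S-{u}" "\<lambda>w. u \<bullet> w = a"] fin by (simp add: deg_def ind_def)
  qed
  define K where "K = (c - 1 - (N - 1) * b\<^sup>2) / (a\<^sup>2 - b\<^sup>2)"
  have degK: "real (deg u) = K" if u: "u \<in> S" for u
  proof -
    have cS1: "real (card (S - {u})) = N - 1"
    proof -
      have "card S \<ge> 1" using fin u by (metis One_nat_def Suc_leI card_gt_0_iff empty_iff)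
      then show ?thesis using fin u by (simp add: N_def card_Diff_singleton of_nat_diff)
    qed
    have "c = (\<Sum>v\<in>S. (u \<bullet> v) * (u \<bullet> v))" using P[of u u] self[OF u] by simp
    also have "\<dots> = 1 + (\<Sum>v\<in>S-{u}. (u \<bullet> v) * (u \<bullet> v))" using sum.remove[OF fin u, of "\<lambda>v. (u \<bullet> v) * (u \<bullet> v)"] self[OF u] by simp
    also have "(\<Sum>v\<in>S-{u}. (u \<bullet> v) * (u \<bullet> v)) = (\<Sum>v\<in>S-{u}. b\<^sup>2 + (a\<^sup>2 - b\<^sup>2) * ind u v)"
    proof (rule sum.cong)
      fix v assume "v \<in> S - {u}"
      then have "u \<bullet> v = a \<or> u \<bullet> v = b" using two u by auto
      then show "(u \<bullet> v) * (u \<bullet> v) = b\<^sup>2 + (a\<^sup>2 - b\<^sup>2) * ind u v"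
        using ab by (auto simp: ind_def power2_eq_square)
    qed simp
    also have "\<dots> = (N - 1) * b\<^sup>2 + (a\<^sup>2 - b\<^sup>2) * real (deg u)"
      using degsum[OF u] cS1 by (simp add: sum.distrib sum_distrib_left[symmetric])
    finally have "c = 1 + ((N - 1) * b\<^sup>2 + (a\<^sup>2 - b\<^sup>2) * real (deg u))" .
    then show ?thesis using ab2' by (simp add: K_def field_simps)
  qed
  define cm :: "real^'n \<Rightarrow> real^'n \<Rightarrow> nat" where "cm u w = card {x\<in>S. (u \<noteq> x \<and> u \<bullet> x = a) \<and> (w \<noteq> x \<and> w \<bullet> x = a)}" for u w
  have key: "c * (u \<bullet> w) = 2 * (u \<bullet> w) + (N - 2) * b\<^sup>2 + 2 * b * (a - b) * (K - ind u w)
     + (a - b)\<^sup>2 * real (cm u w)" if u: "u \<in> S" and w: "w \<in> S" and uw: "u \<noteq> w" for u w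
  proof -
    have cmsum: "real (cm u w) = (\<Sum>v\<in>S-{u,w}. ind u v * ind w v)"
    proof -
      have "{x\<in>S. (u \<noteq> x \<and> u \<bullet> x = a) \<and> (w \<noteq> x \<and> w \<bullet> x = a)} = {x\<in>S-{u,w}. u \<bullet> x = a \<and> w \<bullet> x = a}" by auto
      then show ?thesis using card_ind[of "S-{u,w}" "\<lambda>x. u \<bullet> x = a \<and> w \<bullet> x = a"] fin
        by (simp add: cm_def ind_def) (rule sum.cong, auto)
    qed
    have cS2: "real (card (S - {u,w})) = N - 2"
    proof -
      have "{u,w} \<subseteq> S" using u w by auto
      then have "card (S - {u,w}) = card S - 2" using fin uw by (simp add: card_Diff_subset)
      moreover have "card {u,w} \<le> card S" using \<open>{u,w} \<subseteq> S\<close> fin by (simp add: card_mono)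
      ultimately show ?thesis using uw by (simp add: N_def of_nat_diff)
    qed
    have wS: "w \<in> S - {u}" using w uw by auto
    have eq: "S - {u} - {w} = S - {u,w}" by auto
    have split: "sum f S = f u + f w + sum f (S - {u,w})" for f :: "real^'n \<Rightarrow> real"
      using sum.remove[OF fin u, of f] sum.remove[of "S-{u}" w f] fin wS eq by simp
    have s1: "(\<Sum>v\<in>S-{u,w}. ind u v) = K - ind u w"
      using degsum[OF u] degK[OF u] split[of "\<lambda>v. if v = u then 0 else ind u v"]
        sum.remove[of "S-{u}" w "ind u"] fin wS eq by simp
    have iwu: "ind w u = ind u w" by (simp add: ind_def inner_commute)
    have s2: "(\<Sum>v\<in>S-{u,w}. ind w v) = K - ind u w"
    proof -
      have wS': "u \<in> S - {w}" using u uw by auto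
      have eq': "S - {w} - {u} = S - {u,w}" by auto
      show ?thesis using degsum[OF w] degK[OF w] sum.remove[of "S-{w}" u "ind w"] fin wS' eq' iwu by simp
    qed
    have "c * (u \<bullet> w) = (\<Sum>v\<in>S. (u \<bullet> v) * (w \<bullet> v))" using P by simp
    also have "\<dots> = 2 * (u \<bullet> w) + (\<Sum>v\<in>S-{u,w}. (u \<bullet> v) * (w \<bullet> v))"
      using split self[OF u] self[OF w] by (simp add: inner_commute)
    also have "(\<Sum>v\<in>S-{u,w}. (u \<bullet> v) * (w \<bullet> v)) =
       (\<Sum>v\<in>S-{u,w}. b\<^sup>2 + b * (a - b) * ind u v + b * (a - b) * ind w v + (a - b)\<^sup>2 * (ind u v * ind w v))"
    proof (rule sum.cong)
      fix v assume v: "v \<in> S - {u,w}"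
      have e1: "u \<bullet> v = b + (a - b) * ind u v" and e2: "w \<bullet> v = b + (a - b) * ind w v"
        using val u w v by auto
      show "(u \<bullet> v) * (w \<bullet> v) = b\<^sup>2 + b * (a - b) * ind u v + b * (a - b) * ind w v + (a - b)\<^sup>2 * (ind u v * ind w v)"
        unfolding e1 e2 by (simp add: power2_eq_square algebra_simps)
    qed simp
    also have "\<dots> = (N - 2) * b\<^sup>2 + b * (a - b) * (\<Sum>v\<in>S-{u,w}. ind u v) + b * (a - b) * (\<Sum>v\<in>S-{u,w}. ind w v)
        + (a - b)\<^sup>2 * (\<Sum>v\<in>S-{u,w}. ind u v * ind w v)"
      using cS2 by (simp add: sum.distrib sum_distrib_left[symmetric])
    finally show ?thesis using s1 s2 cmsum by (simp add: algebra_simps)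
  qed
  have adj: "real (cm u w) = (c * a - 2 * a - (N - 2) * b\<^sup>2 - 2 * b * (a - b) * (K - 1)) / (a - b)\<^sup>2"
    if "u \<in> S" "w \<in> S" "u \<noteq> w" "u \<bullet> w = a" for u w
  proof -
    have i: "ind u w = 1" using that by (simp add: ind_def)
    have "(a - b)\<^sup>2 * real (cm u w) = c * a - 2 * a - (N - 2) * b\<^sup>2 - 2 * b * (a - b) * (K - 1)"
      using key[OF that(1-3), unfolded that(4) i] by linarith
    then show ?thesis using abn by (metis nonzero_mult_div_cancel_left)
  qed
  have nadj: "real (cm u w) = (c * b - 2 * b - (N - 2) * b\<^sup>2 - 2 * b * (a - b) * (K - 0)) / (a - b)\<^sup>2"
    if "u \<in> S" "w \<in> S" "u \<noteq> w" "u \<bullet> w \<noteq> a" for u w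
  proof -
    have i: "ind u w = 0" using that by (simp add: ind_def)
    have g: "u \<bullet> w = b" using that two by auto
    have "(a - b)\<^sup>2 * real (cm u w) = c * b - 2 * b - (N - 2) * b\<^sup>2 - 2 * b * (a - b) * (K - 0)"
      using key[OF that(1-3), unfolded g i] by linarith
    then show ?thesis using abn by (metis nonzero_mult_div_cancel_left)
  qed
  have C1: "\<exists>k::nat. \<forall>v\<in>S. deg v = k" using const_nat1[of S deg K] degK by blast
  have C2: "\<exists>l::nat. \<forall>v\<in>S. \<forall>w\<in>S. v \<noteq> w \<and> (v \<noteq> w \<and> v \<bullet> w = a) \<longrightarrow> cm v w = l"
    by (rule const_nat2[where C="(c * a - 2 * a - (N - 2) * b\<^sup>2 - 2 * b * (a - b) * (K - 1)) / (a - b)\<^sup>2"])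
      (intro ballI impI adj, auto)
  have C3: "\<exists>l::nat. \<forall>v\<in>S. \<forall>w\<in>S. v \<noteq> w \<and> \<not> (v \<noteq> w \<and> v \<bullet> w = a) \<longrightarrow> cm v w = l"
    by (rule const_nat2[where C="(c * b - 2 * b - (N - 2) * b\<^sup>2 - 2 * b * (a - b) * (K - 0)) / (a - b)\<^sup>2"])
      (intro ballI impI nadj, auto)
  show ?thesis unfolding strongly_regular_def using C1 C2 C3 by (simp add: deg_def cm_def)
qed

theorem proposition3p2:
  fixes S :: "(real ^ 'n) set" and a b :: real
  assumes "two_distance_tight_frame S a b"
    and "a\<^sup>2 \<noteq> b\<^sup>2"
  shows "strongly_regular S (\<lambda>x y. x \<noteq> y \<and> x \<bullet> y = a)
       \<and> strongly_regular S (\<lambda>x y. x \<noteq> y \<and> x \<bullet> y = b)"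
proof -
  have "two_distance_tight_frame S b a" using assms(1) unfolding two_distance_tight_frame_def by auto
  then show ?thesis using main[OF assms] main[of S b a] assms(2) by auto
qed

end
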